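(* For every integer $n\geq 0$, \[ b_{n}^{(2)}(x)=\sum_{l=0}^{n}\binom{n}{l}\frac{B_{l}\,b_{n-l}(x)}{l+1}. \]
   Context: For $k\in\mathbb{Z}$, the polylogarithm is $Li_k(x)=\sum_{n=1}^{\infty}\frac{x^n}{n^k}$. The poly-Bernoulli polynomials of the second kind $b_n^{(k)}(x)$ are defined by the generating function \[ \frac{Li_{k}(1-e^{-t})}{\log(1+t)}(1+t)^{x}=\sum_{n=0}^{\infty}b_{n}^{(k)}(x)\frac{t^{n}}{n!}. \] The Bernoulli polynomials of the second kind $b_n(x)$ are defined by $\frac{t}{\log(1+t)}(1+t)^x=\sum_{n=0}^{\infty}b_n(x)\frac{t^n}{n!}$. The Bernoulli numbers $B_n$ are defined by $\frac{t}{e^t-1}=\sum_{n=0}^{\infty}B_n\frac{t^n}{n!}$. *)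

theory Defs
  imports "HOL-Computational_Algebra.Formal_Power_Series"
begin

definition polylog_fps :: "int \<Rightarrow> real fps" where
  "polylog_fps k = Abs_fps (\<lambda>n. if n = 0 then 0 else 1 / (real n powi k))"

text \<open>Generating function Li_k(1 - e^{-t}) / log(1+t) * (1+t)^x as a formal power series in t.
  Here fps_exp c = e^{ct}, fps_ln 1 = log(1+t), fps_binomial x = (1+t)^x.\<close>
definition poly_bernoulli2_gf :: "int \<Rightarrow> real \<Rightarrow> real fps" where
  "poly_bernoulli2_gf k x =
     (fps_compose (polylog_fps k) (1 - fps_exp (-1)) / fps_ln 1) * fps_binomial x"

definition poly_bernoulli2 :: "int \<Rightarrow> nat \<Rightarrow> real \<Rightarrow> real" where
  "poly_bernoulli2 k n x = fact n * fps_nth (poly_bernoulli2_gf k x) n"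

definition bernoulli2 :: "nat \<Rightarrow> real \<Rightarrow> real" where
  "bernoulli2 n x = fact n * fps_nth ((fps_X / fps_ln 1) * fps_binomial x) n"

definition bernoulli_num :: "nat \<Rightarrow> real" where
  "bernoulli_num n = fact n * fps_nth (fps_X / (fps_exp 1 - 1)) n"

end

theory Submission
  imports Defs
begin

definition "EE = (1 - fps_exp (-1) :: real fps)"
definition "DD = (Abs_fps (\<lambda>n. 1 / real (Suc n)) :: real fps)"
definition "BF = (fps_X / (fps_exp 1 - 1) :: real fps)"

lemma EE0: "fps_nth EE 0 = 0" by (simp add: EE_def)

lemma deriv_EE: "fps_deriv EE = fps_exp (-1)"
proof -
  have "fps_const (-1::real) = -1" by (metis fps_const_neg fps_const_1_eq_1)
  thus ?thesis by (simp add: EE_def)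
qed

lemma deriv_polylog: "fps_deriv (polylog_fps 2) = DD"
  by (simp add: fps_eq_iff polylog_fps_def DD_def power2_eq_square field_simps del: of_nat_Suc)

lemma XDD_deriv: "fps_deriv (fps_X * DD) * (1 - fps_X) = 1"
proof -
  have d: "fps_deriv (fps_X * DD) = Abs_fps (\<lambda>_. 1)"
    by (auto simp: fps_eq_iff DD_def field_simps simp del: of_nat_Suc)
  show ?thesis unfolding d
    by (auto simp: fps_eq_iff algebra_simps fps_X_mult_right_nth)
qed

lemma exp_inv: "fps_exp (-1) * fps_exp 1 = (1::real fps)"
  using fps_exp_add_mult[of "-1::real" 1] by simp

lemma EE_DD: "EE * (DD oo EE) = fps_X"
proof -
  have "fps_deriv ((fps_X * DD) oo EE) = (fps_deriv (fps_X * DD) oo EE) * fps_exp (-1)"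
    using fps_compose_deriv[OF EE0] deriv_EE by simp
  also have "fps_exp (-1) = 1 - EE" by (simp add: EE_def)
  also have "1 - EE = (1 - fps_X) oo EE"
    using EE0 by (simp add: fps_compose_sub_distrib)
  also have "(fps_deriv (fps_X * DD) oo EE) * ((1 - fps_X) oo EE) = 1"
    using XDD_deriv fps_compose_mult_distrib[OF EE0, symmetric] by simp
  finally have "fps_deriv ((fps_X * DD) oo EE) = fps_deriv fps_X" by simp
  moreover have "fps_nth ((fps_X * DD) oo EE) 0 = 0" by simp
  ultimately have "(fps_X * DD) oo EE = fps_X"
    using fps_deriv_eq_iff[of "(fps_X * DD) oo EE" fps_X] by simp
  thus ?thesis using fps_compose_mult_distrib[OF EE0, of fps_X DD] EE0 by simp
qed

lemma deriv_Pc: "fps_deriv (polylog_fps 2 oo EE) = BF"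
proof -
  have d: "fps_deriv (polylog_fps 2 oo EE) = (DD oo EE) * fps_exp (-1)"
    using fps_compose_deriv[OF EE0] deriv_EE deriv_polylog by simp
  have "fps_deriv (polylog_fps 2 oo EE) * (fps_exp 1 - 1) = (DD oo EE) * (fps_exp (-1) * fps_exp 1 - fps_exp (-1))"
    unfolding d by (simp add: algebra_simps)
  also have "\<dots> = EE * (DD oo EE)" using exp_inv by (simp add: EE_def algebra_simps)
  finally have e: "fps_deriv (polylog_fps 2 oo EE) * (fps_exp 1 - 1) = fps_X" using EE_DD by simp
  have nz: "fps_exp 1 - 1 \<noteq> (0::real fps)"
  proof
    assume "fps_exp 1 - 1 = (0::real fps)"
    hence "fps_nth (fps_exp 1 - 1 :: real fps) 1 = 0" by simp
    thus False by simp
  qed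
  show ?thesis unfolding BF_def e[symmetric] using nz by simp
qed

definition "QQ = Abs_fps (\<lambda>l. fps_nth BF l / real (l + 1))"

lemma Pc_eq: "polylog_fps 2 oo EE = fps_X * QQ"
proof (rule fps_ext)
  fix n
  show "fps_nth (polylog_fps 2 oo EE) n = fps_nth (fps_X * QQ) n"
  proof (cases n)
    case 0 thus ?thesis by (simp add: polylog_fps_def)
  next
    case (Suc m)
    have "fps_nth BF m = real (Suc m) * fps_nth (polylog_fps 2 oo EE) (Suc m)"
      using arg_cong[OF deriv_Pc, of "\<lambda>f. fps_nth f m"] by (simp add: fps_deriv_nth)
    thus ?thesis using Suc by (simp add: QQ_def field_simps del: of_nat_Suc)
  qed
qed

lemma ln_nz: "fps_ln (1::real) \<noteq> 0"
proof
  assume "fps_ln (1::real) = 0"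
  hence "fps_nth (fps_ln (1::real)) 1 = 0" by simp
  thus False by (simp add: fps_ln_nth)
qed

lemma ln_dvd: "fps_ln (1::real) dvd fps_X"
  using ln_nz by (subst fps_dvd_iff) (auto intro!: subdegree_leI simp: fps_ln_nth)

lemma gf_eq: "poly_bernoulli2_gf 2 x = QQ * ((fps_X / fps_ln 1) * fps_binomial x)"
  unfolding poly_bernoulli2_gf_def EE_def[symmetric] Pc_eq
  using div_mult_swap[OF ln_dvd, of QQ] by (simp add: algebra_simps)

theorem theorem1:
  fixes n :: nat and x :: real
  shows "poly_bernoulli2 2 n x =
    (\<Sum>l = 0..n. real (n choose l) * bernoulli_num l * bernoulli2 (n - l) x / real (l + 1))"
proof -
  let ?W = "(fps_X / fps_ln 1) * fps_binomial x"
  have "poly_bernoulli2 2 n x = fact n * (\<Sum>l = 0..n. fps_nth QQ l * fps_nth ?W (n - l))"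
    by (simp add: poly_bernoulli2_def gf_eq fps_mult_nth)
  also have "\<dots> = (\<Sum>l = 0..n. real (n choose l) * bernoulli_num l * bernoulli2 (n - l) x / real (l + 1))"
    unfolding sum_distrib_left
  proof (rule sum.cong[OF refl])
    fix l assume l: "l \<in> {0..n}"
    hence f: "fact n = real (n choose l) * fact l * fact (n - l)"
    proof -
      have "real (fact n) = real (fact l * fact (n-l) * (n choose l))"
        using l binomial_fact_lemma[of l n] by simp
      thus ?thesis by (simp only: of_nat_fact of_nat_mult) (simp add: algebra_simps)
    qed
    show "fact n * (fps_nth QQ l * fps_nth ?W (n - l)) = real (n choose l) * bernoulli_num l * bernoulli2 (n - l) x / real (l + 1)"
      unfolding f by (simp add: QQ_def bernoulli_num_def bernoulli2_def BF_def field_simps)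
  qed
  finally show ?thesis .
qed

end
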